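(* Let $\mathfrak A=(S_\Omega,S_{\mathcal E},\Omega,\mathcal E,B,u)$ be an accessible GPT fragment with $d_\Omega=\dim S_\Omega$ and $d_{\mathcal E}=\dim S_{\mathcal E}$. If $\mathfrak A$ admits a simplicial-cone embedding, then it admits a simplicial-cone embedding $(\Lambda,\tau_\Omega,\tau_{\mathcal E})$ with $|\Lambda|\le d_\Omega d_{\mathcal E}$. If moreover for every $e\in\mathcal E$ there exists $e^\perp\in\mathcal E$ with $e+e^\perp=u$, then $\mathfrak A$ admits a simplex embedding with at most $d_\Omega d_{\mathcal E}$ ontic states; in particular, when $S_\Omega=S_{\mathcal E}$ has dimension $d$, at most $d^2$ ontic states.
   Context: An accessible GPT fragment $\mathfrak A=(S_\Omega,S_{\mathcal E},\Omega,\mathcal E,B,u)$ consists of: finite-dimensional real vector spaces $S_\Omega$ and $S_{\mathcal E}$; a set $\Omega\subset S_\Omega$ of states which spans $S_\Omega$; a set $\mathcal E\subset S_{\mathcal E}^*$ of effects which spans $S_{\mathcal E}^*$; a bilinear form $B:S_{\mathcal E}^*\times S_\Omega\to\mathbb R$ (the probability rule); and a unit effect $u\in\mathcal E$. The convex hulls of $\Omega$ and $\mathcal E$ have finitely many extreme points. A simplicial-cone embedding of $\mathfrak A$ is a finite set $\Lambda$ (the ontic states) together with linear maps $\tau_\Omega:S_\Omega\to\mathbb R^\Lambda$ and $\tau_{\mathcal E}:S_{\mathcal E}^*\to\mathbb R^\Lambda$ such that $\tau_\Omega(s)$ is entrywise nonnegative for all $s\in\Omega$, $\tau_{\mathcal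 E}(e)$ is entrywise nonnegative for all $e\in\mathcal E$, and $B(w,v)=\tau_{\mathcal E}(w)\cdot\tau_\Omega(v)$ for all $w\in S_{\mathcal E}^*$, $v\in S_\Omega$. A simplex embedding is a simplicial-cone embedding which additionally satisfies $\tau_{\mathcal E}(u)=(1,1,\dots,1)$. *)

theory Defs
  imports "HOL-Analysis.Analysis"
begin

text \<open>S_Omega is modelled by the finite-dimensional real vector space type 'a,
  the dual space S_E^* by the type 'e (dim S_E = dim S_E^* = DIM('e)).
  A finite set of ontic states Lambda is modelled (up to bijection) by {..<n};
  vectors in R^Lambda are functions nat => real restricted to indices i < n.\<close>

definition accessible_GPT_fragment ::
  "'a::euclidean_space set \<Rightarrow> 'e::euclidean_space set \<Rightarrow> ('e \<Rightarrow> 'a \<Rightarrow> real) \<Rightarrow> 'e \<Rightarrow> bool" where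
  "accessible_GPT_fragment \<Omega> E B u \<longleftrightarrow>
     span \<Omega> = UNIV \<and> span E = UNIV \<and> bilinear B \<and> u \<in> E \<and>
     finite {x. x extreme_point_of (convex hull \<Omega>)} \<and>
     finite {x. x extreme_point_of (convex hull E)}"

definition simplicial_cone_embedding ::
  "'a::euclidean_space set \<Rightarrow> 'e::euclidean_space set \<Rightarrow> ('e \<Rightarrow> 'a \<Rightarrow> real)
    \<Rightarrow> nat \<Rightarrow> ('a \<Rightarrow> nat \<Rightarrow> real) \<Rightarrow> ('e \<Rightarrow> nat \<Rightarrow> real) \<Rightarrow> bool" where
  "simplicial_cone_embedding \<Omega> E B n \<tau>\<Omega> \<tau>E \<longleftrightarrow>
     (\<forall>i<n. linear (\<lambda>v. \<tau>\<Omega> v i)) \<and> (\<forall>i<n. linear (\<lambda>w. \<tau>E w i)) \<and>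
     (\<forall>s\<in>\<Omega>. \<forall>i<n. 0 \<le> \<tau>\<Omega> s i) \<and>
     (\<forall>e\<in>E. \<forall>i<n. 0 \<le> \<tau>E e i) \<and>
     (\<forall>w v. B w v = (\<Sum>i<n. \<tau>E w i * \<tau>\<Omega> v i))"

definition simplex_embedding ::
  "'a::euclidean_space set \<Rightarrow> 'e::euclidean_space set \<Rightarrow> ('e \<Rightarrow> 'a \<Rightarrow> real) \<Rightarrow> 'e
    \<Rightarrow> nat \<Rightarrow> ('a \<Rightarrow> nat \<Rightarrow> real) \<Rightarrow> ('e \<Rightarrow> nat \<Rightarrow> real) \<Rightarrow> bool" where
  "simplex_embedding \<Omega> E B u n \<tau>\<Omega> \<tau>E \<longleftrightarrow>
     simplicial_cone_embedding \<Omega> E B n \<tau>\<Omega> \<tau>E \<and> (\<forall>i<n. \<tau>E u i = 1)"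

end

theory Submission imports Defs "HOL-Library.Function_Algebras" begin
lemma sum_fun_apply: "finite A \<Longrightarrow> (sum f A) x = (\<Sum>a\<in>A. f a x)"
  by (induction A rule: finite_induct) auto

lemma fun_dependent:
  fixes f :: "nat \<Rightarrow> 'p \<Rightarrow> real"
  assumes P: "finite P" "card P < n" and supp: "\<forall>i x. x \<notin> P \<longrightarrow> f i x = 0"
  shows "\<exists>l. (\<exists>i<n. l i \<noteq> 0) \<and> (\<forall>x. (\<Sum>i<n. l i * f i x) = 0)"
proof (cases "inj_on f {..<n}")
  case False
  then obtain i j where ij: "i < n" "j < n" "i \<noteq> j" "f i = f j"
    unfolding inj_on_def by auto
  define l where "l = (\<lambda>k. if k = i then 1 else if k = j then -1 else (0::real))"
  have "(\<Sum>k<n. l k * f k x) = 0" for x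
  proof -
    have "(\<Sum>k<n. l k * f k x) = (\<Sum>k\<in>{i,j}. l k * f k x)"
      by (rule sum.mono_neutral_right) (use ij in \<open>auto simp: l_def\<close>)
    also have "\<dots> = 0" using ij by (simp add: l_def)
    finally show ?thesis .
  qed
  moreover have "l i \<noteq> 0" by (simp add: l_def)
  ultimately show ?thesis using ij by blast
next
  case True
  define s where "s = (\<lambda>(c::real) (g::'p\<Rightarrow>real) x. c * g x)"
  interpret v: vector_space s
    by unfold_locales (auto simp: s_def fun_eq_iff algebra_simps)
  define d where "d = (\<lambda>p (x::'p). if x = p then 1 else (0::real))"
  define S where "S = f ` {..<n}"
  define T where "T = d ` P"
  have cardS: "card S = n" using True by (simp add: S_def card_image)
  have finT: "finite T" using P by (simp add: T_def)
  have cardT: "card T \<le> card P" using P by (simp add: T_def card_image_le)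
  have sp: "S \<subseteq> v.span T"
  proof
    fix g assume "g \<in> S"
    then obtain i where g: "g = f i" by (auto simp: S_def)
    have "g = (\<Sum>p\<in>P. s (f i p) (d p))"
      using P supp by (auto simp: fun_eq_iff sum_fun_apply g s_def d_def if_distrib cong: if_cong)
    also have "\<dots> \<in> v.span T"
      by (intro v.span_sum v.span_scale v.span_base) (auto simp: T_def)
    finally show "g \<in> v.span T" .
  qed
  have "v.dependent S"
  proof (rule ccontr)
    assume "\<not> v.dependent S"
    from v.independent_span_bound[OF finT this sp] cardS cardT P show False by auto
  qed
  then obtain u where u: "\<exists>g\<in>S. u g \<noteq> 0" "(\<Sum>g\<in>S. s (u g) g) = 0"
    using v.dependent_finite[of S] by (auto simp: S_def)
  have "(\<Sum>i<n. u (f i) * f i x) = 0" for x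
  proof -
    have "(\<Sum>i<n. u (f i) * f i x) = (\<Sum>g\<in>S. s (u g) g) x"
      by (simp add: S_def sum.reindex[OF True] sum_fun_apply s_def)
    then show ?thesis using u(2) by simp
  qed
  moreover obtain i where "i < n" "u (f i) \<noteq> 0" using u(1) by (auto simp: S_def)
  ultimately show ?thesis by (intro exI[of _ "\<lambda>i. u (f i)"]) blast
qed
lemma lin_expand:
  fixes g :: "'a::euclidean_space \<Rightarrow> real"
  assumes "linear g"
  shows "g w = (\<Sum>b\<in>Basis. (w \<bullet> b) * g b)"
proof -
  have "g w = g (\<Sum>b\<in>Basis. (w \<bullet> b) *\<^sub>R b)" by (simp add: euclidean_representation)
  also have "\<dots> = (\<Sum>b\<in>Basis. (w \<bullet> b) * g b)"
    using assms by (simp add: linear_sum linear_scale)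
  finally show ?thesis .
qed

lemma bil_zero:
  fixes tO :: "'a::euclidean_space \<Rightarrow> nat \<Rightarrow> real" and tE :: "'e::euclidean_space \<Rightarrow> nat \<Rightarrow> real"
  assumes lO: "\<forall>i<n. linear (\<lambda>v. tO v i)" and lE: "\<forall>i<n. linear (\<lambda>w. tE w i)"
    and z: "\<forall>b\<in>Basis. \<forall>b'\<in>Basis. (\<Sum>i<n. l i * tE b i * tO b' i) = 0"
  shows "(\<Sum>i<n. l i * tE w i * tO v i) = 0"
proof -
  have "(\<Sum>i<n. l i * tE w i * tO v i) =
     (\<Sum>i<n. l i * (\<Sum>b\<in>Basis. (w \<bullet> b) * tE b i) * (\<Sum>b'\<in>Basis. (v \<bullet> b') * tO b' i))"
    by (rule sum.cong[OF refl]) (metis lin_expand lO lE lessThan_iff)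
  also have "\<dots> = (\<Sum>i<n. \<Sum>b\<in>Basis. \<Sum>b'\<in>Basis. (w \<bullet> b) * (v \<bullet> b') * (l i * tE b i * tO b' i))"
    by (simp add: sum_distrib_left sum_distrib_right mult_ac)
  also have "\<dots> = (\<Sum>b\<in>Basis. \<Sum>b'\<in>Basis. (w \<bullet> b) * (v \<bullet> b') * (\<Sum>i<n. l i * tE b i * tO b' i))"
    by (simp add: sum_distrib_left sum.swap[of _ "{..<n}"] sum.swap[of _ "{..<n}" Basis])
  also have "\<dots> = 0" using z by simp
  finally show ?thesis .
qed

lemma remove_zero:
  assumes emb: "simplicial_cone_embedding \<Omega> E B n tO tE" and k: "k < n"
    and z: "\<forall>w v. tE w k * tO v k = 0"
  defines "\<sigma> \<equiv> (\<lambda>j. if j = k then n-1 else if j = n-1 then k else j)"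
  shows "simplicial_cone_embedding \<Omega> E B (n-1) (\<lambda>v j. tO v (\<sigma> j)) (\<lambda>w j. tE w (\<sigma> j))"
proof -
  have sl: "j < n - 1 \<Longrightarrow> \<sigma> j < n" for j using k by (auto simp: \<sigma>_def)
  have "B w v = (\<Sum>j<n-1. tE w (\<sigma> j) * tO v (\<sigma> j))" for w v
  proof -
    have "B w v = (\<Sum>i<n. tE w i * tO v i)" using emb by (simp add: simplicial_cone_embedding_def)
    also have "\<dots> = (\<Sum>j<n. tE w (\<sigma> j) * tO v (\<sigma> j))"
      by (rule sum.reindex_bij_witness[where i=\<sigma> and j=\<sigma>]) (use k in \<open>auto simp: \<sigma>_def\<close>)
    also have "\<dots> = (\<Sum>j<Suc (n-1). tE w (\<sigma> j) * tO v (\<sigma> j))" using k by simp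
    also have "\<dots> = (\<Sum>j<n-1. tE w (\<sigma> j) * tO v (\<sigma> j))"
      using z[rule_format, of w v] by (simp add: \<sigma>_def)
    finally show ?thesis .
  qed
  then show ?thesis using emb sl by (simp add: simplicial_cone_embedding_def)
qed

lemma reduce:
  fixes \<Omega> :: "'a::euclidean_space set" and E :: "'e::euclidean_space set"
  assumes emb: "simplicial_cone_embedding \<Omega> E B n tO tE" and big: "DIM('a) * DIM('e) < n"
  shows "\<exists>tO' tE'. simplicial_cone_embedding \<Omega> E B (n-1) tO' tE'"
proof -
  have lO: "\<forall>i<n. linear (\<lambda>v. tO v i)" and lE: "\<forall>i<n. linear (\<lambda>w. tE w i)"
    and nO: "\<forall>s\<in>\<Omega>. \<forall>i<n. 0 \<le> tO s i" and nE: "\<forall>e\<in>E. \<forall>i<n. 0 \<le> tE e i"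
    and sB: "\<forall>w v. B w v = (\<Sum>i<n. tE w i * tO v i)"
    using emb by (auto simp: simplicial_cone_embedding_def)
  define P where "P = (Basis :: 'e set) \<times> (Basis :: 'a set)"
  define f where "f = (\<lambda>i (x::'e\<times>'a). if x \<in> P then tE (fst x) i * tO (snd x) i else 0)"
  have "finite P" "card P < n" using big by (auto simp: P_def card_cartesian_product mult.commute)
  then obtain l0 where l0: "\<exists>i<n. l0 i \<noteq> 0" "\<forall>x. (\<Sum>i<n. l0 i * f i x) = 0"
    using fun_dependent[of P n f] by (auto simp: f_def)
  define l where "l = (if \<exists>i<n. l0 i > 0 then l0 else (\<lambda>i. - l0 i))"
  have lpos: "\<exists>i<n. l i > 0"
  proof (cases "\<exists>i<n. l0 i > 0")
    case False
    then show ?thesis using l0(1) by (auto simp: l_def) (metis less_linear)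
  qed (auto simp: l_def)
  have l0': "\<forall>x. (\<Sum>i<n. l i * f i x) = 0"
    using l0(2) by (auto simp: l_def sum_negf)
  have z: "\<forall>b\<in>Basis. \<forall>b'\<in>Basis. (\<Sum>i<n. l i * tE b i * tO b' i) = 0"
  proof (intro ballI)
    fix b :: 'e and b' :: 'a assume "b \<in> Basis" "b' \<in> Basis"
    then show "(\<Sum>i<n. l i * tE b i * tO b' i) = 0"
      using l0'[rule_format, of "(b,b')"] by (simp add: f_def P_def mult.assoc)
  qed
  have zz: "(\<Sum>i<n. l i * tE w i * tO v i) = 0" for w v
    using bil_zero[OF lO lE z] .
  define K where "K = {i. i < n \<and> l i > 0}"
  have K: "finite (l ` K)" "l ` K \<noteq> {}" using lpos by (auto simp: K_def)
  define m where "m = Max (l ` K)"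
  obtain k where k: "k \<in> K" "l k = m" using Max_in[OF K] by (auto simp: m_def)
  have kn: "k < n" and lk: "l k > 0" using k by (auto simp: K_def)
  have le: "i < n \<Longrightarrow> l i \<le> l k" for i
  proof (cases "l i > 0")
    case True
    assume "i < n"
    then have "l i \<in> l ` K" using True by (auto simp: K_def)
    then show ?thesis using Max_ge[OF K(1)] k by (auto simp: m_def)
  qed (use lk in auto)
  define c where "c = (\<lambda>i. 1 - l i / l k)"
  have cnn: "i < n \<Longrightarrow> 0 \<le> c i" for i
    using le[of i] lk by (simp add: c_def field_simps)
  define tE' where "tE' = (\<lambda>w i. c i * tE w i)"
  have emb': "simplicial_cone_embedding \<Omega> E B n tO tE'"
    unfolding simplicial_cone_embedding_def
  proof (intro conjI allI impI ballI)
    fix i assume "i < n"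
    then have "linear (\<lambda>w. tE w i)" using lE by auto
    then show "linear (\<lambda>w. tE' w i)" 
      by (simp add: tE'_def linear_iff algebra_simps)
  next
    fix e i assume "e \<in> E" "i < n"
    then show "0 \<le> tE' e i" using nE cnn by (auto simp: tE'_def)
  next
    fix w v
    have "(\<Sum>i<n. tE' w i * tO v i) = (\<Sum>i<n. tE w i * tO v i) - (\<Sum>i<n. l i * tE w i * tO v i) / l k"
      using lk by (simp add: tE'_def c_def sum_divide_distrib flip: sum_subtractf) (simp add: field_simps)
    then show "B w v = (\<Sum>i<n. tE' w i * tO v i)" using zz sB by simp
  qed (use lO nO in auto)
  have "\<forall>w v. tE' w k * tO v k = 0" using lk by (simp add: tE'_def c_def)
  from remove_zero[OF emb' kn this] show ?thesis by blast
qed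

lemma reduce_all:
  fixes \<Omega> :: "'a::euclidean_space set" and E :: "'e::euclidean_space set"
  shows "simplicial_cone_embedding \<Omega> E B n tO tE \<Longrightarrow>
    \<exists>n' tO' tE'. simplicial_cone_embedding \<Omega> E B n' tO' tE' \<and> n' \<le> DIM('a) * DIM('e)"
proof (induction n arbitrary: tO tE rule: less_induct)
  case (less n)
  show ?case
  proof (cases "DIM('a) * DIM('e) < n")
    case True
    then obtain tO' tE' where "simplicial_cone_embedding \<Omega> E B (n-1) tO' tE'"
      using reduce[OF less.prems] by blast
    then show ?thesis using less.IH[of "n-1"] True by auto
  qed (use less.prems in \<open>auto simp: not_less\<close>)
qed

lemma make_pos:
  fixes \<Omega> :: "'a::euclidean_space set" and E :: "'e::euclidean_space set"
  assumes compl: "\<forall>e\<in>E. \<exists>e'\<in>E. e + e' = u" and uE: "u \<in> E" and spE: "span E = UNIV"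
  shows "simplicial_cone_embedding \<Omega> E B n tO tE \<Longrightarrow>
    \<exists>n' tO' tE'. simplicial_cone_embedding \<Omega> E B n' tO' tE' \<and> n' \<le> n \<and> (\<forall>i<n'. tE' u i > 0)"
proof (induction n arbitrary: tO tE rule: less_induct)
  case (less n)
  have lE: "\<forall>i<n. linear (\<lambda>w. tE w i)" and nE: "\<forall>e\<in>E. \<forall>i<n. 0 \<le> tE e i"
    using less.prems by (auto simp: simplicial_cone_embedding_def)
  show ?case
  proof (cases "\<exists>k<n. tE u k = 0")
    case True
    then obtain k where k: "k < n" "tE u k = 0" by blast
    have lin: "linear (\<lambda>w. tE w k)" using lE k(1) by blast
    have zE: "tE e k = 0" if eE: "e \<in> E" for e
    proof -
      obtain e' where e': "e' \<in> E" "e + e' = u" using bspec[OF compl eE] by blast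
      have "tE e k + tE e' k = tE u k" using linear_add[OF lin, of e e'] e' by simp
      moreover have "tE e k \<ge> 0" "tE e' k \<ge> 0" using nE eE e' k by auto
      ultimately show ?thesis using k by linarith
    qed
    have "tE w k = 0" for w
    proof -
      have "w \<in> span E" using spE by simp
      from real_vector.linear_eq_0_on_span[OF lin zE this] show ?thesis .
    qed
    then have "\<forall>w v. tE w k * tO v k = 0" by simp
    from remove_zero[OF less.prems k(1) this] obtain tO1 tE1 where
      "simplicial_cone_embedding \<Omega> E B (n-1) tO1 tE1" by blast
    have "n - 1 < n" using k by simp
    from less.IH[OF this \<open>simplicial_cone_embedding \<Omega> E B (n-1) tO1 tE1\<close>] obtain n' tO' tE' where
      "simplicial_cone_embedding \<Omega> E B n' tO' tE'" "n' \<le> n - 1" "\<forall>i<n'. tE' u i > 0" by blast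
    then show ?thesis by (intro exI[of _ n'] exI[of _ tO'] exI[of _ tE']) auto
  next
    case False
    have "\<forall>i<n. tE u i > 0"
    proof (intro allI impI)
      fix i assume "i < n"
      then have "tE u i \<ge> 0" "tE u i \<noteq> 0" using nE uE False by auto
      then show "tE u i > 0" by simp
    qed
    then show ?thesis using less.prems by (intro exI[of _ n] exI[of _ tO] exI[of _ tE]) simp
  qed
qed

lemma rescale:
  fixes \<Omega> :: "'a::euclidean_space set" and E :: "'e::euclidean_space set"
  assumes emb: "simplicial_cone_embedding \<Omega> E B n tO tE" and pos: "\<forall>i<n. tE u i > 0"
  shows "simplex_embedding \<Omega> E B u n (\<lambda>v i. tE u i * tO v i) (\<lambda>w i. tE w i / tE u i)"
proof -
  have lO: "\<forall>i<n. linear (\<lambda>v. tO v i)" and lE: "\<forall>i<n. linear (\<lambda>w. tE w i)"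
    and nO: "\<forall>s\<in>\<Omega>. \<forall>i<n. 0 \<le> tO s i" and nE: "\<forall>e\<in>E. \<forall>i<n. 0 \<le> tE e i"
    and sB: "\<forall>w v. B w v = (\<Sum>i<n. tE w i * tO v i)"
    using emb by (auto simp: simplicial_cone_embedding_def)
  show ?thesis unfolding simplex_embedding_def simplicial_cone_embedding_def
  proof (intro conjI allI impI ballI)
    fix i assume i: "i < n"
    then have "linear (\<lambda>w. tE w i)" "linear (\<lambda>v. tO v i)" using lE lO by auto
    then show "linear (\<lambda>w. tE w i / tE u i)" "linear (\<lambda>v. tE u i * tO v i)"
      by (simp_all add: linear_iff algebra_simps add_divide_distrib)
    show "tE u i / tE u i = 1" using pos i by auto
  next
    fix s i assume "s \<in> \<Omega>" "i < n"
    then show "0 \<le> tE u i * tO s i" using nO pos by (auto intro: mult_nonneg_nonneg less_imp_le)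
  next
    fix e i assume "e \<in> E" "i < n"
    then show "0 \<le> tE e i / tE u i" using nE pos by (auto intro: divide_nonneg_pos)
  next
    fix w v
    have "(\<Sum>i<n. tE w i / tE u i * (tE u i * tO v i)) = (\<Sum>i<n. tE w i * tO v i)"
      by (rule sum.cong[OF refl]) (use pos in auto)
    then show "B w v = (\<Sum>i<n. tE w i / tE u i * (tE u i * tO v i))" using sB by simp
  qed
qed

theorem mainTheorem5:
  fixes \<Omega> :: "'a::euclidean_space set" and E :: "'e::euclidean_space set"
    and B :: "'e \<Rightarrow> 'a \<Rightarrow> real" and u :: 'e
  assumes "accessible_GPT_fragment \<Omega> E B u"
    and "\<exists>n \<tau>\<Omega> \<tau>E. simplicial_cone_embedding \<Omega> E B n \<tau>\<Omega> \<tau>E"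
  shows "(\<exists>n \<tau>\<Omega> \<tau>E. simplicial_cone_embedding \<Omega> E B n \<tau>\<Omega> \<tau>E \<and> n \<le> DIM('a) * DIM('e))
    \<and> ((\<forall>e\<in>E. \<exists>e'\<in>E. e + e' = u) \<longrightarrow>
         (\<exists>n \<tau>\<Omega> \<tau>E. simplex_embedding \<Omega> E B u n \<tau>\<Omega> \<tau>E \<and> n \<le> DIM('a) * DIM('e)))"
proof -
  obtain n tO tE where "simplicial_cone_embedding \<Omega> E B n tO tE" using assms(2) by blast
  from reduce_all[OF this] obtain n1 tO1 tE1 where e1:
    "simplicial_cone_embedding \<Omega> E B n1 tO1 tE1" "n1 \<le> DIM('a) * DIM('e)" by blast
  have uE: "u \<in> E" and spE: "span E = UNIV" using assms(1) by (auto simp: accessible_GPT_fragment_def)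
  show ?thesis
  proof (intro conjI impI)
    show "\<exists>n \<tau>\<Omega> \<tau>E. simplicial_cone_embedding \<Omega> E B n \<tau>\<Omega> \<tau>E \<and> n \<le> DIM('a) * DIM('e)"
      using e1 by blast
  next
    assume c: "\<forall>e\<in>E. \<exists>e'\<in>E. e + e' = u"
    from make_pos[OF c uE spE e1(1)] obtain n2 tO2 tE2 where
      e2: "simplicial_cone_embedding \<Omega> E B n2 tO2 tE2" "n2 \<le> n1" "\<forall>i<n2. tE2 u i > 0" by blast
    have le2: "n2 \<le> DIM('a) * DIM('e)" using e2(2) e1(2) by linarith
    show "\<exists>n \<tau>\<Omega> \<tau>E. simplex_embedding \<Omega> E B u n \<tau>\<Omega> \<tau>E \<and> n \<le> DIM('a) * DIM('e)"
      using rescale[OF e2(1) e2(3)] le2 by blast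
  qed
qed

end
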